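(* Let $S$ be a shape graph, let $t\in\Gamma$, and let $T=\{t'\in\Gamma\mid t=t'\}$ be the set of types equivalent to $t$ w.r.t. $S$. Then for every shape graph $S'$ with $S'\equiv S$ and every context $(u,a)\in\Gamma\times\Sigma$: $$\sum_{s\in T}\mathsf{minarity}_S(u,a,s)=\sum_{s\in T}\mathsf{minarity}_{S'}(u,a,s).$$
   Context: Fix finite sets $\Sigma$ (edge labels) and $\Gamma$ (types). Graphs and shape graphs. A graph is $G=(N_G,E_G)$ with $E_G\subseteq N_G\times\Sigma\times N_G$. A shape graph is a function $\mathsf{arity}_S:\Gamma\times\Sigma\times\Gamma\to\{[0;0],[0;1],[1;1],[0;\infty],[1;\infty]\}$. $\mathsf{minarity}_S(u,a,s)$ denotes the lower bound of the interval $\mathsf{arity}_S(u,a,s)$. Satisfaction. A node $n$ satisfies type $t$ w.r.t. $S$ iff there is $\lambda$ from the outgoing edges of $n$ to $\Gamma$ such that (1) each edge's target satisfies $\lambda(e)$, and (2) for all $a\in\Sigma$ and $s\in\Gamma$, the number of outgoing $a$-edges $e$ with $\lambda(e)=s$ lies in $\mathsf{arity}_S(t,a,s)$. (This recursion is read as the largest such relation, as usual for shape expression schemas.) Typings and languages. $\mathit{typing}_G(n)$ is the set of types that $n$ satisfies. $L(S)$ is the set of finite graphs, equipped with their typing, in which every node has at least one type. $S\equiv S'$ iff $L(S)=L(S')$. Type equivalence. $t=t'$ w.r.t. $S$ means: for every $G\in L(S)$ and $n\in N_G$, $t\in\mathit{typing}_G(n)$ iff $t'\in\mathit{typing}_G(n)$.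 A context is a pair $(u,a)\in\Gamma\times\Sigma$. *)

theory Defs
  imports Main
begin

datatype interval = I00 | I01 | I11 | I0Inf | I1Inf

fun in_interval :: "nat \<Rightarrow> interval \<Rightarrow> bool" where
  "in_interval k I00 = (k = 0)"
| "in_interval k I01 = (k \<le> 1)"
| "in_interval k I11 = (k = 1)"
| "in_interval k I0Inf = True"
| "in_interval k I1Inf = (1 \<le> k)"

fun lower :: "interval \<Rightarrow> nat" where
  "lower I00 = 0" | "lower I01 = 0" | "lower I11 = 1" | "lower I0Inf = 0" | "lower I1Inf = 1"

text \<open>A shape graph over edge labels 'l and types 't: the arity function.\<close>
type_synonym ('t, 'l) shape = "'t \<Rightarrow> 'l \<Rightarrow> 't \<Rightarrow> interval"

definition minarity :: "('t, 'l) shape \<Rightarrow> 't \<Rightarrow> 'l \<Rightarrow> 't \<Rightarrow> nat" where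
  "minarity S u a s = lower (S u a s)"

text \<open>Graphs: nodes are natural numbers (every finite graph is isomorphic to one of these).\<close>
type_synonym 'l graph = "nat set \<times> (nat \<times> 'l \<times> nat) set"

definition nodes :: "'l graph \<Rightarrow> nat set" where "nodes G = fst G"
definition edges :: "'l graph \<Rightarrow> (nat \<times> 'l \<times> nat) set" where "edges G = snd G"

definition finite_graph :: "'l graph \<Rightarrow> bool" where
  "finite_graph G \<longleftrightarrow> finite (nodes G) \<and>
     (\<forall>(n, a, m) \<in> edges G. n \<in> nodes G \<and> m \<in> nodes G)"

definition out_edges :: "'l graph \<Rightarrow> nat \<Rightarrow> (nat \<times> 'l \<times> nat) set" where
  "out_edges G n = {e \<in> edges G. fst e = n}"

definition edge_label :: "nat \<times> 'l \<times> nat \<Rightarrow> 'l" where "edge_label e = fst (snd e)"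
definition edge_target :: "nat \<times> 'l \<times> nat \<Rightarrow> nat" where "edge_target e = snd (snd e)"

definition sat_step :: "('t, 'l) shape \<Rightarrow> 'l graph \<Rightarrow> (nat \<times> 't) set \<Rightarrow> (nat \<times> 't) set" where
  "sat_step S G R = {(n, t). n \<in> nodes G \<and>
     (\<exists>lam :: nat \<times> 'l \<times> nat \<Rightarrow> 't.
        (\<forall>e \<in> out_edges G n. (edge_target e, lam e) \<in> R) \<and>
        (\<forall>a s. in_interval (card {e \<in> out_edges G n. edge_label e = a \<and> lam e = s}) (S t a s)))}"

definition satisfies :: "('t, 'l) shape \<Rightarrow> 'l graph \<Rightarrow> (nat \<times> 't) set" where
  "satisfies S G = gfp (sat_step S G)"

definition typing :: "('t, 'l) shape \<Rightarrow> 'l graph \<Rightarrow> nat \<Rightarrow> 't set" where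
  "typing S G n = {t. (n, t) \<in> satisfies S G}"

definition lang :: "('t, 'l) shape \<Rightarrow> ('l graph \<times> (nat \<Rightarrow> 't set)) set" where
  "lang S = {(G, typing S G) | G. finite_graph G \<and> (\<forall>n \<in> nodes G. typing S G n \<noteq> {})}"

definition shape_equiv :: "('t, 'l) shape \<Rightarrow> ('t, 'l) shape \<Rightarrow> bool" where
  "shape_equiv S S' \<longleftrightarrow> lang S = lang S'"

definition type_eq :: "('t, 'l) shape \<Rightarrow> 't \<Rightarrow> 't \<Rightarrow> bool" where
  "type_eq S t t' \<longleftrightarrow> (\<forall>G \<in> fst ` lang S. \<forall>n \<in> nodes G.
      (t \<in> typing S G n \<longleftrightarrow> t' \<in> typing S G n))"

end

theory Submission
  imports Defs "HOL-Library.Nat_Bijection"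
begin


lemma sat_step_mono: "mono (sat_step S G)"
  unfolding mono_def sat_step_def by blast

lemma satisfies_unfold: "satisfies S G = sat_step S G (satisfies S G)"
  unfolding satisfies_def using gfp_unfold[OF sat_step_mono] .

lemma satisfies_coind: "R \<subseteq> sat_step S G R \<Longrightarrow> R \<subseteq> satisfies S G"
  unfolding satisfies_def by (rule gfp_upperbound)

lemma sat_step_iff: "(n,t) \<in> sat_step S G R \<longleftrightarrow> n \<in> nodes G \<and> (\<exists>lam.
   (\<forall>e\<in>out_edges G n. (edge_target e, lam e) \<in> R) \<and>
   (\<forall>a s. in_interval (card {e \<in> out_edges G n. edge_label e = a \<and> lam e = s}) (S t a s)))"
  by (simp add: sat_step_def)

lemma sat_iff: "(n,t) \<in> satisfies S G \<longleftrightarrow> n \<in> nodes G \<and> (\<exists>lam.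
   (\<forall>e\<in>out_edges G n. (edge_target e, lam e) \<in> satisfies S G) \<and>
   (\<forall>a s. in_interval (card {e \<in> out_edges G n. edge_label e = a \<and> lam e = s}) (S t a s)))"
  by (subst satisfies_unfold) (simp add: sat_step_def)

lemma in_lang_pair: "finite_graph G \<Longrightarrow> (\<forall>n\<in>nodes G. typing S G n \<noteq> {}) \<Longrightarrow> (G, typing S G) \<in> lang S"
  unfolding lang_def by blast

lemma in_lang_fst: "G \<in> fst ` lang S \<longleftrightarrow> finite_graph G \<and> (\<forall>n\<in>nodes G. typing S G n \<noteq> {})"
proof
  assume "G \<in> fst ` lang S"
  then obtain p where p: "p \<in> lang S" "G = fst p" by blast
  then show "finite_graph G \<and> (\<forall>n\<in>nodes G. typing S G n \<noteq> {})" unfolding lang_def by auto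
next
  assume "finite_graph G \<and> (\<forall>n\<in>nodes G. typing S G n \<noteq> {})"
  then have "(G, typing S G) \<in> lang S" using in_lang_pair by blast
  then show "G \<in> fst ` lang S" by (metis fst_conv image_eqI)
qed

lemma fe_label: "edge_label ((\<lambda>(x,b,y). (f x, b, f y)) e) = edge_label e"
  by (cases e) (simp add: edge_label_def)
lemma fe_target: "edge_target ((\<lambda>(x,b,y). (f x, b, f y)) e) = f (edge_target e)"
  by (cases e) (simp add: edge_target_def)
lemma fe_inj: "inj f \<Longrightarrow> inj (\<lambda>(x::nat,b::'l,y). (f x, b, f y))"
  unfolding inj_def by auto

lemma sat_stepI:
  assumes "n \<in> nodes G" "\<forall>e\<in>out_edges G n. (edge_target e, lam e) \<in> R"
    "\<forall>a s. in_interval (card {e \<in> out_edges G n. edge_label e = a \<and> lam e = s}) (S t a s)"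
  shows "(n,t) \<in> sat_step S G R"
  unfolding sat_step_def using assms by blast

lemma Collect_image_eq: "{e \<in> g ` A. Q e} = g ` {e \<in> A. Q (g e)}"
  by blast

lemma embed_typing:
  fixes G H :: "'l graph" and f :: "nat \<Rightarrow> nat"
  assumes fg: "finite_graph G" and inj: "inj f"
    and nds: "\<forall>n\<in>nodes G. f n \<in> nodes H"
    and outs: "\<forall>n\<in>nodes G. out_edges H (f n) = (\<lambda>(x,b,y). (f x, b, f y)) ` out_edges G n"
    and n: "n \<in> nodes G"
  shows "typing S H (f n) = typing S G n"
proof -
  define fe where "fe = (\<lambda>(x::nat,b::'l,y). (f x, b, f y))"
  have ife: "inj fe" unfolding fe_def by (rule fe_inj[OF inj])
  have lab: "\<And>e. edge_label (fe e) = edge_label e" unfolding fe_def by (rule fe_label)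
  have tgt: "\<And>e. edge_target (fe e) = f (edge_target e)" unfolding fe_def by (rule fe_target)
  have outs': "\<And>n. n \<in> nodes G \<Longrightarrow> out_edges H (f n) = fe ` out_edges G n"
    using outs unfolding fe_def by blast
  define R1 where "R1 = (\<lambda>(m,t). (f m, t)) ` satisfies S G"
  have "R1 \<subseteq> sat_step S H R1"
  proof
    fix p assume "p \<in> R1"
    then obtain m t where p: "p = (f m, t)" and mt: "(m,t) \<in> satisfies S G"
      unfolding R1_def by auto
    from mt obtain lam where m: "m \<in> nodes G"
      and l1: "\<forall>e\<in>out_edges G m. (edge_target e, lam e) \<in> satisfies S G"
      and l2: "\<forall>a s. in_interval (card {e \<in> out_edges G m. edge_label e = a \<and> lam e = s}) (S t a s)"
      using sat_iff[THEN iffD1, OF mt] by blast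
    define lam' where "lam' = lam \<circ> inv fe"
    have lam': "\<And>e. lam' (fe e) = lam e" unfolding lam'_def using ife by simp
    have "\<forall>e\<in>out_edges H (f m). (edge_target e, lam' e) \<in> R1"
    proof
      fix e' assume "e' \<in> out_edges H (f m)"
      then obtain e where e': "e' = fe e" and e: "e \<in> out_edges G m" using outs'[OF m] by auto
      have "(edge_target e, lam e) \<in> satisfies S G" using l1 e by blast
      then have "(f (edge_target e), lam e) \<in> R1" unfolding R1_def by (rule rev_image_eqI) simp
      then show "(edge_target e', lam' e') \<in> R1" by (simp only: e' lam' tgt)
    qed
    moreover have "\<forall>a s. in_interval (card {e \<in> out_edges H (f m). edge_label e = a \<and> lam' e = s}) (S t a s)"
    proof (intro allI)
      fix a s
      have "{e \<in> out_edges H (f m). edge_label e = a \<and> lam' e = s} = fe ` {e \<in> out_edges G m. edge_label (fe e) = a \<and> lam' (fe e) = s}"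
        by (simp only: outs'[OF m] Collect_image_eq)
      also have "\<dots> = fe ` {e \<in> out_edges G m. edge_label e = a \<and> lam e = s}"
        by (simp only: lab lam')
      finally have eq1: "{e \<in> out_edges H (f m). edge_label e = a \<and> lam' e = s} = fe ` {e \<in> out_edges G m. edge_label e = a \<and> lam e = s}" .
      have "card (fe ` {e \<in> out_edges G m. edge_label e = a \<and> lam e = s}) = card {e \<in> out_edges G m. edge_label e = a \<and> lam e = s}"
        by (rule card_image) (meson ife inj_on_subset subset_UNIV)
      then show "in_interval (card {e \<in> out_edges H (f m). edge_label e = a \<and> lam' e = s}) (S t a s)"
        using l2 by (simp only: eq1)
    qed
    moreover have "f m \<in> nodes H" using nds m by blast
    ultimately show "p \<in> sat_step S H R1" unfolding p by (intro sat_stepI)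
  qed
  then have sub1: "R1 \<subseteq> satisfies S H" by (rule satisfies_coind)
  define R2 where "R2 = {(m,t). m \<in> nodes G \<and> (f m, t) \<in> satisfies S H}"
  have "R2 \<subseteq> sat_step S G R2"
  proof
    fix p assume "p \<in> R2"
    then obtain m t where p: "p = (m, t)" and m: "m \<in> nodes G" and mt: "(f m,t) \<in> satisfies S H"
      unfolding R2_def by auto
    from mt obtain lam where
      l1: "\<forall>e\<in>out_edges H (f m). (edge_target e, lam e) \<in> satisfies S H"
      and l2: "\<forall>a s. in_interval (card {e \<in> out_edges H (f m). edge_label e = a \<and> lam e = s}) (S t a s)"
      using sat_iff[THEN iffD1, OF mt] by blast
    define lam' where "lam' = lam \<circ> fe"
    have "\<forall>e\<in>out_edges G m. (edge_target e, lam' e) \<in> R2"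
    proof
      fix e assume e: "e \<in> out_edges G m"
      then have "fe e \<in> out_edges H (f m)" using outs'[OF m] by auto
      then have "(edge_target (fe e), lam (fe e)) \<in> satisfies S H" using l1 by blast
      then have "(f (edge_target e), lam' e) \<in> satisfies S H" by (simp add: tgt lam'_def)
      moreover have "edge_target e \<in> nodes G"
        using e fg unfolding out_edges_def finite_graph_def edge_target_def by auto
      ultimately show "(edge_target e, lam' e) \<in> R2" unfolding R2_def by simp
    qed
    moreover have "\<forall>a s. in_interval (card {e \<in> out_edges G m. edge_label e = a \<and> lam' e = s}) (S t a s)"
    proof (intro allI)
      fix a s
      have "{e \<in> out_edges H (f m). edge_label e = a \<and> lam e = s} = fe ` {e \<in> out_edges G m. edge_label (fe e) = a \<and> lam (fe e) = s}"
        by (simp only: outs'[OF m] Collect_image_eq)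
      also have "\<dots> = fe ` {e \<in> out_edges G m. edge_label e = a \<and> lam' e = s}"
        by (simp only: lab lam'_def o_def)
      finally have eq1: "{e \<in> out_edges H (f m). edge_label e = a \<and> lam e = s} = fe ` {e \<in> out_edges G m. edge_label e = a \<and> lam' e = s}" .
      have c: "card (fe ` {e \<in> out_edges G m. edge_label e = a \<and> lam' e = s}) = card {e \<in> out_edges G m. edge_label e = a \<and> lam' e = s}"
        by (rule card_image) (meson ife inj_on_subset subset_UNIV)
      have "in_interval (card {e \<in> out_edges H (f m). edge_label e = a \<and> lam e = s}) (S t a s)"
        using l2 by blast
      then have "in_interval (card (fe ` {e \<in> out_edges G m. edge_label e = a \<and> lam' e = s})) (S t a s)"
        by (simp only: eq1)
      then show "in_interval (card {e \<in> out_edges G m. edge_label e = a \<and> lam' e = s}) (S t a s)"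
        by (simp only: c)
    qed
    ultimately show "p \<in> sat_step S G R2" unfolding p using m by (intro sat_stepI)
  qed
  then have sub2: "R2 \<subseteq> satisfies S G" by (rule satisfies_coind)
  show ?thesis
  proof
    show "typing S H (f n) \<subseteq> typing S G n" using sub2 n unfolding typing_def R2_def by auto
    show "typing S G n \<subseteq> typing S H (f n)" using sub1 unfolding typing_def R1_def by auto
  qed
qed



lemma lower_le_in: "in_interval k I \<Longrightarrow> lower I \<le> k"
  by (cases I) auto

lemma in_interval_lower: "in_interval (if lower I = 1 then 1 else 0) I"
  by (cases I) auto

lemma lower_le1: "lower I \<le> 1"
  by (cases I) auto

lemma inj_idx: "\<exists>idx :: 'a::finite \<Rightarrow> nat. inj idx"
  using finite_imp_inj_to_nat_seg[OF finite_UNIV[where 'a='a]] by blast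

lemma exists_sat:
  fixes S :: "('t::finite,'l) shape"
  shows "\<exists>G \<in> fst ` lang S. \<exists>m \<in> nodes G. s \<in> typing S G m"
proof -
  obtain idx :: "'t \<Rightarrow> nat" where idx: "inj idx" using inj_idx by blast
  define C :: "'l graph" where "C = (range idx, {(idx x, b, idx y) | x b y. lower (S x b y) = 1})"
  define R where "R = {(idx x, x) | x. True}"
  have out: "out_edges C (idx x) = {(idx x, b, idx y) | b y. lower (S x b y) = 1}" for x
    unfolding out_edges_def C_def edges_def using idx by (auto simp: inj_eq)
  have "R \<subseteq> sat_step S C R"
  proof
    fix p assume "p \<in> R"
    then obtain x where p: "p = (idx x, x)" unfolding R_def by auto
    define lam :: "nat \<times> 'l \<times> nat \<Rightarrow> 't" where "lam = (\<lambda>e. inv idx (edge_target e))"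
    have "\<forall>e\<in>out_edges C (idx x). (edge_target e, lam e) \<in> R"
      unfolding out lam_def R_def edge_target_def using idx by auto
    moreover have "\<forall>a s. in_interval (card {e \<in> out_edges C (idx x). edge_label e = a \<and> lam e = s}) (S x a s)"
    proof (intro allI)
      fix a s
      have lam_simp: "lam (idx x, b, idx y) = y" for b y unfolding lam_def edge_target_def using idx by simp
      show "in_interval (card {e \<in> out_edges C (idx x). edge_label e = a \<and> lam e = s}) (S x a s)"
      proof (cases "lower (S x a s) = 1")
        case True
        have "{e \<in> out_edges C (idx x). edge_label e = a \<and> lam e = s} = {(idx x, a, idx s)}"
        proof (intro equalityI subsetI)
          fix e assume "e \<in> {e \<in> out_edges C (idx x). edge_label e = a \<and> lam e = s}"
          then obtain b y where "e = (idx x, b, idx y)" "edge_label e = a" "lam e = s"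
            unfolding out by blast
          then show "e \<in> {(idx x, a, idx s)}" by (simp add: lam_simp edge_label_def)
        next
          fix e assume "e \<in> {(idx x, a, idx s)}"
          then show "e \<in> {e \<in> out_edges C (idx x). edge_label e = a \<and> lam e = s}"
            using True by (auto simp add: out lam_simp edge_label_def)
        qed
        then show ?thesis using in_interval_lower[of "S x a s"] True by simp
      next
        case False
        have "{e \<in> out_edges C (idx x). edge_label e = a \<and> lam e = s} = {}"
        proof (rule equals0I)
          fix e assume "e \<in> {e \<in> out_edges C (idx x). edge_label e = a \<and> lam e = s}"
          then obtain b y where "e = (idx x, b, idx y)" "lower (S x b y) = 1" "edge_label e = a" "lam e = s"
            unfolding out by blast
          then show False using False by (simp add: lam_simp edge_label_def)
        qed
        then have "card {e \<in> out_edges C (idx x). edge_label e = a \<and> lam e = s} = 0" by (simp only: card.empty)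
        moreover have "in_interval 0 (S x a s)" using in_interval_lower[of "S x a s"] False by simp
        ultimately show ?thesis by (simp only:)
      qed
    qed
    moreover have "idx x \<in> nodes C" unfolding C_def nodes_def by simp
    ultimately show "p \<in> sat_step S C R" unfolding p sat_step_iff by blast
  qed
  then have sub: "R \<subseteq> satisfies S C" by (rule satisfies_coind)
  have Rin: "x \<in> typing S C (idx x)" for x
  proof -
    have "(idx x, x) \<in> R" unfolding R_def by blast
    then have "(idx x, x) \<in> satisfies S C" using sub by blast
    then show ?thesis unfolding typing_def by simp
  qed
  have nC: "nodes C = range idx" unfolding C_def nodes_def by simp
  have eC: "edges C = {(idx x, b, idx y) | x b y. lower (S x b y) = 1}" unfolding C_def edges_def by simp
  have c1: "C \<in> fst ` lang S"
    unfolding in_lang_fst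
  proof
    have "\<forall>(n, a, m) \<in> edges C. n \<in> nodes C \<and> m \<in> nodes C" unfolding nC eC by blast
    then show "finite_graph C" unfolding finite_graph_def nC by simp
    show "\<forall>n\<in>nodes C. typing S C n \<noteq> {}"
      unfolding nC using Rin by blast
  qed
  have c2: "idx s \<in> nodes C" using nC by simp
  show ?thesis
  proof (rule bexI)
    show "\<exists>m\<in>nodes C. s \<in> typing S C m" 
    proof (rule bexI[where x="idx s"])
      show "s \<in> typing S C (idx s)" by (rule Rin)
      show "idx s \<in> nodes C" by (rule c2)
    qed
    show "C \<in> fst ` lang S" by (rule c1)
  qed
qed


definition le_ty :: "('t, 'l) shape \<Rightarrow> 't \<Rightarrow> 't \<Rightarrow> bool" where
  "le_ty S s x \<longleftrightarrow> (\<forall>G \<in> fst ` lang S. \<forall>n \<in> nodes G. s \<in> typing S G n \<longrightarrow> x \<in> typing S G n)"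

lemma finite_edges: "finite_graph G \<Longrightarrow> finite (edges (G::('l::finite) graph))"
  by (rule finite_subset[of _ "nodes G \<times> (UNIV::'l set) \<times> nodes G"])
     (auto simp: finite_graph_def)

lemma lower_bound:
  fixes S :: "('t::finite,'l::finite) shape"
  assumes G: "G \<in> fst ` lang S" and n: "n \<in> nodes G" and u: "u \<in> typing S G n"
  shows "(\<Sum>s\<in>{s. le_ty S s t}. minarity S u a s) \<le> card {e \<in> out_edges G n. edge_label e = a \<and> t \<in> typing S G (edge_target e)}"
proof -
  have fg: "finite_graph G" using G by (simp add: in_lang_fst)
  from u obtain lam where
      l1: "\<forall>e\<in>out_edges G n. (edge_target e, lam e) \<in> satisfies S G"
      and l2: "\<forall>a s. in_interval (card {e \<in> out_edges G n. edge_label e = a \<and> lam e = s}) (S u a s)"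
      using sat_iff[THEN iffD1, OF u[unfolded typing_def, simplified]] by blast
  define E where "E = (\<lambda>s. {e \<in> out_edges G n. edge_label e = a \<and> lam e = s})"
  define D where "D = {s. le_ty S s t}"
  have fo: "finite (out_edges G n)" using finite_edges[OF fg] unfolding out_edges_def by auto
  have "(\<Sum>s\<in>D. minarity S u a s) \<le> (\<Sum>s\<in>D. card (E s))"
    by (rule sum_mono) (use l2 lower_le_in in \<open>auto simp: minarity_def E_def\<close>)
  also have "\<dots> = card (\<Union>s\<in>D. E s)"
    by (rule card_UN_disjoint[symmetric]) (use fo in \<open>auto simp: E_def\<close>)
  also have "\<dots> \<le> card {e \<in> out_edges G n. edge_label e = a \<and> t \<in> typing S G (edge_target e)}"
  proof (rule card_mono)
    show "finite {e \<in> out_edges G n. edge_label e = a \<and> t \<in> typing S G (edge_target e)}" using fo by auto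
    show "(\<Union>s\<in>D. E s) \<subseteq> {e \<in> out_edges G n. edge_label e = a \<and> t \<in> typing S G (edge_target e)}"
    proof
      fix e assume "e \<in> (\<Union>s\<in>D. E s)"
      then obtain s where s: "le_ty S s t" and e: "e \<in> out_edges G n" "edge_label e = a" "lam e = s"
        unfolding D_def E_def by auto
      have "s \<in> typing S G (edge_target e)" using l1 e unfolding typing_def by auto
      moreover have "edge_target e \<in> nodes G"
        using e fg unfolding out_edges_def finite_graph_def edge_target_def by auto
      ultimately have "t \<in> typing S G (edge_target e)" using s G unfolding le_ty_def by blast
      then show "e \<in> {e \<in> out_edges G n. edge_label e = a \<and> t \<in> typing S G (edge_target e)}" using e by auto
    qed
  qed
  finally show ?thesis unfolding D_def .
qed



lemma choose_graphs:
  fixes S :: "('t::finite,'l) shape"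
  shows "\<exists>P. \<forall>s. fst (P s) \<in> fst ` lang S \<and> snd (P s) \<in> nodes (fst (P s)) \<and> s \<in> typing S (fst (P s)) (snd (P s))
           \<and> (\<not> le_ty S s t \<longrightarrow> t \<notin> typing S (fst (P s)) (snd (P s)))"
proof -
  have "\<forall>s. \<exists>p. fst p \<in> fst ` lang S \<and> snd p \<in> nodes (fst p) \<and> s \<in> typing S (fst p) (snd p)
           \<and> (\<not> le_ty S s t \<longrightarrow> t \<notin> typing S (fst p) (snd p))"
  proof
    fix s
    show "\<exists>p. fst p \<in> fst ` lang S \<and> snd p \<in> nodes (fst p) \<and> s \<in> typing S (fst p) (snd p)
           \<and> (\<not> le_ty S s t \<longrightarrow> t \<notin> typing S (fst p) (snd p))"
    proof (cases "le_ty S s t")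
      case True
      from exists_sat[of S s] obtain G m where "G \<in> fst ` lang S" "m \<in> nodes G" "s \<in> typing S G m"
        by blast
      then show ?thesis using True by (intro exI[of _ "(G,m)"]) simp
    next
      case False
      then obtain G m where "G \<in> fst ` lang S" "m \<in> nodes G" "s \<in> typing S G m" "t \<notin> typing S G m"
        unfolding le_ty_def by blast
      then show ?thesis by (intro exI[of _ "(G,m)"]) simp
    qed
  qed
  then show ?thesis by (rule choice)
qed

lemma sum_lower_card:
  "(\<Sum>s\<in>A. lower (I s)) = card {s \<in> A. lower (I s) = 1}" if "finite A"
proof -
  have "(\<Sum>s\<in>A. lower (I s)) = (\<Sum>s\<in>A. if lower (I s) = 1 then 1 else 0)"
  proof (rule sum.cong)
    fix s show "lower (I s) = (if lower (I s) = 1 then 1 else 0)" using lower_le1[of "I s"] by auto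
  qed simp
  also have "\<dots> = (\<Sum>s\<in>{s \<in> A. lower (I s) = 1}. 1)"
    using that by (rule sum.inter_filter[symmetric])
  also have "\<dots> = card {s \<in> A. lower (I s) = 1}" by simp
  finally show ?thesis .
qed

lemma witness:
  fixes S :: "('t::finite,'l::finite) shape"
  shows "\<exists>G \<in> fst ` lang S. \<exists>n \<in> nodes G. u \<in> typing S G n \<and>
     card {e \<in> out_edges G n. edge_label e = a \<and> t \<in> typing S G (edge_target e)} = (\<Sum>s\<in>{s. le_ty S s t}. minarity S u a s)"
proof -
  obtain P where P: "\<And>s. fst (P s) \<in> fst ` lang S" "\<And>s. snd (P s) \<in> nodes (fst (P s))"
     "\<And>s. s \<in> typing S (fst (P s)) (snd (P s))"
     "\<And>s. \<not> le_ty S s t \<Longrightarrow> t \<notin> typing S (fst (P s)) (snd (P s))"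
    using choose_graphs[of S t] by blast
  define Gs where "Gs s = fst (P s)" for s
  define ms where "ms s = snd (P s)" for s
  have GS1: "Gs s \<in> fst ` lang S" for s using P(1) unfolding Gs_def by blast
  have GS2: "ms s \<in> nodes (Gs s)" for s using P(2) unfolding Gs_def ms_def by blast
  have GS3: "s \<in> typing S (Gs s) (ms s)" for s using P(3) unfolding Gs_def ms_def by blast
  have GS4: "\<not> le_ty S s t \<Longrightarrow> t \<notin> typing S (Gs s) (ms s)" for s using P(4) unfolding Gs_def ms_def by blast
  obtain idx :: "'t \<Rightarrow> nat" where idx: "inj idx" using inj_idx by blast
  define enc where "enc s x = Suc (prod_encode (idx s, x))" for s x
  have enc_eq: "enc s x = enc s' x' \<longleftrightarrow> s = s' \<and> x = x'" for s x s' x'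
    unfolding enc_def using idx by (auto simp: inj_eq prod_encode_eq)
  have enc0: "enc s x \<noteq> 0" for s x unfolding enc_def by simp
  have inj_enc: "inj (enc s)" for s by (rule injI) (simp add: enc_eq)
  define fe where "fe s = (\<lambda>(x::nat,b::'l,y). (enc s x, b, enc s y))" for s
  define g where "g s = enc s (ms s)" for s
  have g_eq: "g s = g s' \<longleftrightarrow> s = s'" for s s' unfolding g_def by (auto simp: enc_eq)
  have inj_g: "inj g" by (rule injI) (simp add: g_eq)
  define H :: "'l graph" where "H = (insert 0 (\<Union>s. enc s ` nodes (Gs s)),
      (\<Union>s. fe s ` edges (Gs s)) \<union> {(0, b, g s) | b s. lower (S u b s) = 1})"
  have nH: "nodes H = insert 0 (\<Union>s. enc s ` nodes (Gs s))" by (simp add: H_def nodes_def)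
  have eH: "edges H = (\<Union>s. fe s ` edges (Gs s)) \<union> {(0, b, g s) | b s. lower (S u b s) = 1}"
    by (simp add: H_def edges_def)
  have fgs: "finite_graph (Gs s)" for s using GS1 by (simp add: in_lang_fst)
  have fst_fe: "fst (fe s e) = enc s (fst e)" for s e by (cases e) (simp add: fe_def)
  have out_enc: "out_edges H (enc s x) = fe s ` out_edges (Gs s) x" for s x
  proof (intro equalityI subsetI)
    fix e :: "nat \<times> 'l \<times> nat" assume "e \<in> out_edges H (enc s x)"
    then have e: "e \<in> edges H" "fst e = enc s x" by (simp_all add: out_edges_def)
    from e(1) consider (a) s' e0 where "e0 \<in> edges (Gs s')" "e = fe s' e0" | (b) b s' where "e = (0,b,g s')"
      unfolding eH by blast
    then show "e \<in> fe s ` out_edges (Gs s) x"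
    proof cases
      case a
      then have "enc s' (fst e0) = enc s x" using e(2) fst_fe by simp
      then have "s' = s" "fst e0 = x" using enc_eq by blast+
      then show ?thesis using a unfolding out_edges_def by blast
    next
      case b
      then have False using e(2) enc0 by simp
      then show ?thesis ..
    qed
  next
    fix e :: "nat \<times> 'l \<times> nat" assume "e \<in> fe s ` out_edges (Gs s) x"
    then obtain e0 where "e0 \<in> edges (Gs s)" "fst e0 = x" "e = fe s e0" unfolding out_edges_def by blast
    then show "e \<in> out_edges H (enc s x)" unfolding out_edges_def eH using fst_fe by blast
  qed
  have typH: "typing S H (enc s x) = typing S (Gs s) x" if "x \<in> nodes (Gs s)" for s x
  proof (rule embed_typing[OF fgs inj_enc _ _ that])
    show "\<forall>n\<in>nodes (Gs s). enc s n \<in> nodes H" unfolding nH by blast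
    show "\<forall>n\<in>nodes (Gs s). out_edges H (enc s n) = (\<lambda>(x, b, y). (enc s x, b, enc s y)) ` out_edges (Gs s) n"
      using out_enc unfolding fe_def by blast
  qed
  have typg: "typing S H (g s) = typing S (Gs s) (ms s)" for s unfolding g_def by (rule typH[OF GS2])
  have out0: "out_edges H 0 = {(0, b, g s) | b s. lower (S u b s) = 1}"
  proof (intro equalityI subsetI)
    fix e :: "nat \<times> 'l \<times> nat" assume "e \<in> out_edges H 0"
    then have e: "e \<in> edges H" "fst e = 0" by (simp_all add: out_edges_def)
    from e(1) consider (a) s' e0 where "e0 \<in> edges (Gs s')" "e = fe s' e0" | (b) "e \<in> {(0, b, g s) | b s. lower (S u b s) = 1}"
      unfolding eH by blast
    then show "e \<in> {(0, b, g s) | b s. lower (S u b s) = 1}"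
    proof cases
      case a
      then have False using e(2) fst_fe enc0 by metis
      then show ?thesis ..
    qed
  next
    fix e :: "nat \<times> 'l \<times> nat" assume "e \<in> {(0, b, g s) | b s. lower (S u b s) = 1}"
    then show "e \<in> out_edges H 0" unfolding out_edges_def eH by auto
  qed
  have finH: "finite_graph H"
  proof -
    have "finite (nodes (Gs s))" for s using fgs[of s] unfolding finite_graph_def by blast
    then have "finite (nodes H)" unfolding nH by (intro finite.insertI finite_UN_I) auto
    moreover have "n \<in> nodes H \<and> m \<in> nodes H" if "(n, b, m) \<in> edges H" for n b m
    proof -
      from that consider (a) s e0 where "e0 \<in> edges (Gs s)" "(n, b, m) = fe s e0" | (b) s where "(n,b,m) = (0,b,g s)"
        unfolding eH by blast
      then show ?thesis
      proof cases
        case a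
        obtain x y where e0: "e0 = (x, b, y)" using a(2) unfolding fe_def by (cases e0) auto
        have "x \<in> nodes (Gs s) \<and> y \<in> nodes (Gs s)" using fgs[of s] a(1) unfolding finite_graph_def e0 by blast
        moreover have "n = enc s x" "m = enc s y" using a(2) unfolding e0 fe_def by simp_all
        ultimately show ?thesis unfolding nH by blast
      next
        case b
        then have "n = 0" "m = g s" by simp_all
        then show ?thesis unfolding nH g_def using GS2[of s] by blast
      qed
    qed
    ultimately show ?thesis unfolding finite_graph_def by blast
  qed
  define lam :: "nat \<times> 'l \<times> nat \<Rightarrow> 't" where "lam e = inv g (edge_target e)" for e
  have lam_simp: "lam (0, b, g s) = s" for b s unfolding lam_def edge_target_def using inj_g by simp
  define R where "R = insert (0, u) (satisfies S H)"
  have "R \<subseteq> sat_step S H R"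
  proof -
    have "satisfies S H \<subseteq> sat_step S H R"
    proof -
      have "satisfies S H = sat_step S H (satisfies S H)" by (rule satisfies_unfold)
      also have "\<dots> \<subseteq> sat_step S H R" using sat_step_mono unfolding R_def mono_def by blast
      finally show ?thesis .
    qed
    moreover have "(0, u) \<in> sat_step S H R"
    proof (rule sat_stepI)
      show "0 \<in> nodes H" unfolding nH by simp
      show "\<forall>e\<in>out_edges H 0. (edge_target e, lam e) \<in> R"
      proof
        fix e :: "nat \<times> 'l \<times> nat" assume "e \<in> out_edges H 0"
        then obtain b s where e: "e = (0, b, g s)" unfolding out0 by blast
        have "s \<in> typing S H (g s)" using typg GS3 by simp
        then have "(g s, s) \<in> satisfies S H" unfolding typing_def by simp
        then show "(edge_target e, lam e) \<in> R" unfolding R_def e lam_simp by (simp add: edge_target_def)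
      qed
      show "\<forall>b s. in_interval (card {e \<in> out_edges H 0. edge_label e = b \<and> lam e = s}) (S u b s)"
      proof (intro allI)
        fix b s
        show "in_interval (card {e \<in> out_edges H 0. edge_label e = b \<and> lam e = s}) (S u b s)"
        proof (cases "lower (S u b s) = 1")
          case True
          have "{e \<in> out_edges H 0. edge_label e = b \<and> lam e = s} = {(0, b, g s)}"
          proof (intro equalityI subsetI)
            fix e :: "nat \<times> 'l \<times> nat" assume "e \<in> {e \<in> out_edges H 0. edge_label e = b \<and> lam e = s}"
            then obtain b' s' where "e = (0, b', g s')" "edge_label e = b" "lam e = s"
              unfolding out0 by blast
            then show "e \<in> {(0, b, g s)}" by (simp add: lam_simp edge_label_def)
          next
            fix e :: "nat \<times> 'l \<times> nat" assume "e \<in> {(0, b, g s)}"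
            then have "e = (0, b, g s)" by simp
            then show "e \<in> {e \<in> out_edges H 0. edge_label e = b \<and> lam e = s}"
              unfolding out0 using True by (auto simp add: lam_simp edge_label_def)
          qed
          then show ?thesis using in_interval_lower[of "S u b s"] True by simp
        next
          case False
          have "{e \<in> out_edges H 0. edge_label e = b \<and> lam e = s} = {}"
          proof (rule equals0I)
            fix e :: "nat \<times> 'l \<times> nat" assume "e \<in> {e \<in> out_edges H 0. edge_label e = b \<and> lam e = s}"
            then obtain b' s' where "e = (0, b', g s')" "lower (S u b' s') = 1" "edge_label e = b" "lam e = s"
              unfolding out0 by blast
            then show False using False by (simp add: lam_simp edge_label_def)
          qed
          then have "card {e \<in> out_edges H 0. edge_label e = b \<and> lam e = s} = 0" by (simp only: card.empty)
          moreover have "in_interval 0 (S u b s)" using in_interval_lower[of "S u b s"] False by simp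
          ultimately show ?thesis by (simp only:)
        qed
      qed
    qed
    ultimately show ?thesis unfolding R_def by blast
  qed
  then have "R \<subseteq> satisfies S H" by (rule satisfies_coind)
  then have u0: "u \<in> typing S H 0" unfolding R_def typing_def by blast
  have HL: "H \<in> fst ` lang S"
    unfolding in_lang_fst
  proof (intro conjI finH ballI)
    fix n assume "n \<in> nodes H"
    then consider "n = 0" | s x where "x \<in> nodes (Gs s)" "n = enc s x" unfolding nH by blast
    then show "typing S H n \<noteq> {}"
    proof cases
      case 1 then show ?thesis using u0 by blast
    next
      case 2
      have "typing S (Gs s) x \<noteq> {}" using GS1[of s] 2(1) unfolding in_lang_fst by blast
      then show ?thesis using typH[OF 2(1)] 2(2) by simp
    qed
  qed
  have t_iff: "t \<in> typing S H (g s) \<longleftrightarrow> le_ty S s t" for s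
  proof
    assume "t \<in> typing S H (g s)"
    then show "le_ty S s t" using GS4[of s] typg[of s] by auto
  next
    assume "le_ty S s t"
    then have "t \<in> typing S (Gs s) (ms s)" using GS1[of s] GS2[of s] GS3[of s] unfolding le_ty_def by blast
    then show "t \<in> typing S H (g s)" using typg by simp
  qed
  have cset: "{e \<in> out_edges H 0. edge_label e = a \<and> t \<in> typing S H (edge_target e)}
      = (\<lambda>s. (0, a, g s)) ` {s. lower (S u a s) = 1 \<and> le_ty S s t}"
  proof (intro equalityI subsetI)
    fix e :: "nat \<times> 'l \<times> nat" assume "e \<in> {e \<in> out_edges H 0. edge_label e = a \<and> t \<in> typing S H (edge_target e)}"
    then obtain b s where e: "e = (0, b, g s)" "lower (S u b s) = 1" "edge_label e = a" "t \<in> typing S H (edge_target e)"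
      unfolding out0 by blast
    then have "b = a" "le_ty S s t" using t_iff by (simp_all add: edge_label_def edge_target_def)
    then show "e \<in> (\<lambda>s. (0, a, g s)) ` {s. lower (S u a s) = 1 \<and> le_ty S s t}" using e by blast
  next
    fix e :: "nat \<times> 'l \<times> nat" assume "e \<in> (\<lambda>s. (0, a, g s)) ` {s. lower (S u a s) = 1 \<and> le_ty S s t}"
    then obtain s where e: "e = (0, a, g s)" "lower (S u a s) = 1" "le_ty S s t" by blast
    then show "e \<in> {e \<in> out_edges H 0. edge_label e = a \<and> t \<in> typing S H (edge_target e)}"
      unfolding out0 using t_iff by (auto simp: edge_label_def edge_target_def)
  qed
  have "card {e \<in> out_edges H 0. edge_label e = a \<and> t \<in> typing S H (edge_target e)}
      = card {s. lower (S u a s) = 1 \<and> le_ty S s t}"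
    unfolding cset by (rule card_image) (auto intro: inj_onI simp: g_eq)
  also have "\<dots> = card {s \<in> {s. le_ty S s t}. lower (S u a s) = 1}"
    by (rule arg_cong[where f=card]) blast
  also have "\<dots> = (\<Sum>s\<in>{s. le_ty S s t}. minarity S u a s)"
    unfolding minarity_def by (rule sum_lower_card[symmetric]) simp
  finally have cnt: "card {e \<in> out_edges H 0. edge_label e = a \<and> t \<in> typing S H (edge_target e)}
      = (\<Sum>s\<in>{s. le_ty S s t}. minarity S u a s)" .
  show ?thesis
  proof (rule bexI[OF _ HL])
    show "\<exists>n\<in>nodes H. u \<in> typing S H n \<and> card {e \<in> out_edges H n. edge_label e = a \<and> t \<in> typing S H (edge_target e)} = (\<Sum>s\<in>{s. le_ty S s t}. minarity S u a s)"
    proof (rule bexI[where x=0])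
      show "u \<in> typing S H 0 \<and> card {e \<in> out_edges H 0. edge_label e = a \<and> t \<in> typing S H (edge_target e)} = (\<Sum>s\<in>{s. le_ty S s t}. minarity S u a s)"
        using u0 cnt by blast
      show "0 \<in> nodes H" unfolding nH by simp
    qed
  qed
qed



lemma typing_equiv:
  assumes eq: "shape_equiv S S'" and G: "G \<in> fst ` lang S"
  shows "typing S' G = typing S G"
proof -
  have "(G, typing S G) \<in> lang S" using G unfolding in_lang_fst by (blast intro: in_lang_pair)
  then have "(G, typing S G) \<in> lang S'" using eq by (simp add: shape_equiv_def)
  then obtain G' where "(G, typing S G) = (G', typing S' G')" unfolding lang_def by blast
  then show ?thesis by auto
qed

lemma le_ty_equiv:
  assumes eq: "shape_equiv S S'"
  shows "le_ty S' = le_ty S"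
proof (intro ext)
  fix s x
  have fl: "fst ` lang S' = fst ` lang S" using eq by (simp add: shape_equiv_def)
  show "le_ty S' s x = le_ty S s x"
    unfolding le_ty_def fl using typing_equiv[OF eq] by auto
qed

lemma half:
  fixes S S' :: "('t::finite,'l::finite) shape"
  assumes eq: "shape_equiv S S'"
  shows "(\<Sum>s\<in>{s. le_ty S s t}. minarity S' u a s) \<le> (\<Sum>s\<in>{s. le_ty S s t}. minarity S u a s)"
proof -
  obtain G n where G: "G \<in> fst ` lang S" and n: "n \<in> nodes G" and u: "u \<in> typing S G n"
    and c: "card {e \<in> out_edges G n. edge_label e = a \<and> t \<in> typing S G (edge_target e)} = (\<Sum>s\<in>{s. le_ty S s t}. minarity S u a s)"
    using witness[of S u a t] by blast
  have G': "G \<in> fst ` lang S'" using G eq by (simp add: shape_equiv_def)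
  have ty: "typing S' G = typing S G" by (rule typing_equiv[OF eq G])
  have "(\<Sum>s\<in>{s. le_ty S' s t}. minarity S' u a s) \<le> card {e \<in> out_edges G n. edge_label e = a \<and> t \<in> typing S' G (edge_target e)}"
    by (rule lower_bound[OF G' n]) (simp add: ty u)
  then show ?thesis using c by (simp add: ty le_ty_equiv[OF eq])
qed

lemma downset_sum:
  fixes le :: "'t::finite \<Rightarrow> 't \<Rightarrow> bool" and m1 m2 :: "'t \<Rightarrow> nat"
  assumes refl: "\<And>x. le x x" and trans: "\<And>x y z. le x y \<Longrightarrow> le y z \<Longrightarrow> le x z"
    and F: "\<And>t. (\<Sum>s\<in>{s. le s t}. m1 s) = (\<Sum>s\<in>{s. le s t}. m2 s)"
  shows "(\<Sum>s\<in>{s. le s t \<and> le t s}. m1 s) = (\<Sum>s\<in>{s. le s t \<and> le t s}. m2 s)"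
proof -
  define dc where "dc A \<longleftrightarrow> (\<forall>x\<in>A. \<forall>s. le s x \<longrightarrow> s \<in> A)" for A
  define D where "D x = {s. le s x}" for x
  define Cl where "Cl x = {s. le s x \<and> le x s}" for x
  have dcD: "dc (D x)" for x unfolding dc_def D_def using trans by blast
  have dcB: "dc (D x - Cl x)" for x unfolding dc_def D_def Cl_def using trans by blast
  have ClD: "Cl x \<subseteq> D x" for x unfolding Cl_def D_def by blast
  have main: "dc A \<Longrightarrow> sum m1 A = sum m2 A" for A
  proof (induction "card A" arbitrary: A rule: less_induct)
    case less
    show ?case
    proof (cases "A = {}")
      case True then show ?thesis by simp
    next
      case False
      have finA: "finite A" by simp
      have "Max ((\<lambda>x. card (D x)) ` A) \<in> (\<lambda>x. card (D x)) ` A"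
        using False finA by (intro Max_in) auto
      then obtain t where tA: "t \<in> A" and tM: "Max ((\<lambda>x. card (D x)) ` A) = card (D t)"
        by blast
      have tmax: "le x t" if "x \<in> A" "le t x" for x
      proof (rule ccontr)
        assume nx: "\<not> le x t"
        have "D t \<subset> D x" unfolding D_def using that(2) nx refl trans by blast
        then have "card (D t) < card (D x)" by (rule psubset_card_mono[rotated]) simp
        moreover have "card (D x) \<le> Max ((\<lambda>x. card (D x)) ` A)" using that(1) finA by simp
        ultimately show False using tM by simp
      qed
      define A' where "A' = A - Cl t"
      define B where "B = D t - Cl t"
      have DA: "D t \<subseteq> A" using less.prems tA unfolding dc_def D_def by blast
      have AU: "A = A' \<union> D t" unfolding A'_def using DA ClD by blast
      have AI: "A' \<inter> D t = B" unfolding A'_def B_def using DA by blast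
      have tCl: "t \<in> Cl t" unfolding Cl_def using refl by blast
      have cA': "card A' < card A" unfolding A'_def using tA tCl finA by (intro psubset_card_mono) auto
      have cB: "card B < card A" unfolding B_def using tA tCl DA finA by (intro psubset_card_mono) auto
      have dcA': "dc A'"
        unfolding dc_def A'_def
      proof (intro ballI allI impI)
        fix x s assume x: "x \<in> A - Cl t" and sx: "le s x"
        have "s \<in> A" using less.prems x sx unfolding dc_def by blast
        moreover have "s \<notin> Cl t"
        proof
          assume "s \<in> Cl t"
          then have "le t x" using sx trans unfolding Cl_def by blast
          then have "le x t" using tmax x by blast
          then have "x \<in> Cl t" using \<open>le t x\<close> unfolding Cl_def by blast
          then show False using x by blast
        qed
        ultimately show "s \<in> A - Cl t" by blast
      qed
      have IH1: "sum m1 A' = sum m2 A'" using less.hyps[OF cA' dcA'] .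
      have IH2: "sum m1 B = sum m2 B" using less.hyps[OF cB] dcB unfolding B_def by blast
      have F': "sum m1 (D t) = sum m2 (D t)" using F unfolding D_def .
      have U1: "sum m1 A + sum m1 B = sum m1 A' + sum m1 (D t)"
        using sum.union_inter[of A' "D t" m1] AU AI by simp
      have U2: "sum m2 A + sum m2 B = sum m2 A' + sum m2 (D t)"
        using sum.union_inter[of A' "D t" m2] AU AI by simp
      show ?thesis using U1 U2 IH1 IH2 F' by linarith
    qed
  qed
  have S1: "sum m1 (D t) = sum m1 (D t - Cl t) + sum m1 (Cl t)"
    by (rule sum.subset_diff[OF ClD]) simp
  have S2: "sum m2 (D t) = sum m2 (D t - Cl t) + sum m2 (Cl t)"
    by (rule sum.subset_diff[OF ClD]) simp
  have "sum m1 (Cl t) = sum m2 (Cl t)"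
    using S1 S2 main[OF dcD[of t]] main[OF dcB[of t]] by linarith
  then show ?thesis unfolding Cl_def .
qed

theorem proposition4:
  fixes S S' :: "('t::finite, 'l::finite) shape" and t u :: 't and a :: 'l
  assumes "shape_equiv S S'"
  shows "(\<Sum>s \<in> {t'. type_eq S t t'}. minarity S u a s)
       = (\<Sum>s \<in> {t'. type_eq S t t'}. minarity S' u a s)"
proof -
  have eq': "shape_equiv S' S" using assms by (simp add: shape_equiv_def)
  have F: "(\<Sum>s\<in>{s. le_ty S s x}. minarity S u a s) = (\<Sum>s\<in>{s. le_ty S s x}. minarity S' u a s)" for x
  proof (rule antisym)
    show "(\<Sum>s\<in>{s. le_ty S s x}. minarity S' u a s) \<le> (\<Sum>s\<in>{s. le_ty S s x}. minarity S u a s)"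
      by (rule half[OF assms])
    have "(\<Sum>s\<in>{s. le_ty S' s x}. minarity S u a s) \<le> (\<Sum>s\<in>{s. le_ty S' s x}. minarity S' u a s)"
      by (rule half[OF eq'])
    then show "(\<Sum>s\<in>{s. le_ty S s x}. minarity S u a s) \<le> (\<Sum>s\<in>{s. le_ty S s x}. minarity S' u a s)"
      by (simp add: le_ty_equiv[OF assms])
  qed
  have T: "{t'. type_eq S t t'} = {s. le_ty S s t \<and> le_ty S t s}"
    unfolding type_eq_def le_ty_def by blast
  have R: "le_ty S x x" for x unfolding le_ty_def by blast
  have Tr: "le_ty S x y \<Longrightarrow> le_ty S y z \<Longrightarrow> le_ty S x z" for x y z unfolding le_ty_def by blast
  show ?thesis unfolding T by (rule downset_sum[of "le_ty S", OF R Tr F])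
qed

end
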